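(* Let $C\subseteq\mathbb{R}^d$ be a closed cone and let $\bar z\in C$. Then \[\operatorname{Lsp}(C)+[\bar z]\subseteq\operatorname{Lsp}(T_C(\bar z)).\]
   Context: For a cone $C\subseteq\mathbb{R}^d$, $\operatorname{Lsp}(C)$ denotes the largest linear subspace $L\subseteq\mathbb{R}^d$ such that $C+L\subseteq C$ (this is well defined). For $z\in\mathbb{R}^d$, $[z]=\{\alpha z\mid\alpha\in\mathbb{R}\}$. $T_C(\bar z)=\{w\mid \exists t_k\downarrow 0,\ w_k\to w \text{ with } \bar z+t_kw_k\in C\ \forall k\}$ is the tangent (contingent) cone. *)

theory Defs
  imports "HOL-Analysis.Analysis"
begin

definition Lsp :: "'a::euclidean_space set \<Rightarrow> 'a set" where
  "Lsp C = (GREATEST L. subspace L \<and> (\<forall>x\<in>C. \<forall>l\<in>L. x + l \<in> C))"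

definition line_of :: "'a::euclidean_space \<Rightarrow> 'a set" where
  "line_of z = {\<alpha> *\<^sub>R z | \<alpha>. True}"

definition msum :: "'a::euclidean_space set \<Rightarrow> 'a set \<Rightarrow> 'a set" where
  "msum A B = {a + b | a b. a \<in> A \<and> b \<in> B}"

definition tangent_cone :: "'a::euclidean_space set \<Rightarrow> 'a \<Rightarrow> 'a set" where
  "tangent_cone C z = {w. \<exists>(t::nat \<Rightarrow> real) (ws::nat \<Rightarrow> 'a).
      (\<forall>k. t k > 0) \<and> decseq t \<and> t \<longlonglongrightarrow> 0 \<and> ws \<longlonglongrightarrow> w \<and>
      (\<forall>k. z + t k *\<^sub>R ws k \<in> C)}"

end

theory Submission
  imports Defs
begin

lemma Lsp_char:
  "(subspace (Lsp C) \<and> (\<forall>x\<in>C. \<forall>l\<in>Lsp C. x + l \<in> C)) \<and>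
   (\<forall>L. subspace L \<and> (\<forall>x\<in>C. \<forall>l\<in>L. x + l \<in> C) \<longrightarrow> L \<subseteq> Lsp C)"
proof -
  let ?P = "\<lambda>L. subspace L \<and> (\<forall>x\<in>C. \<forall>l\<in>L. x + l \<in> C)"
  let ?M = "\<Union>{L. ?P L}"
  have sub: "subspace ?M"
  proof (rule subspaceI)
    have "?P {0}" by (auto simp: subspace_def)
    then show "0 \<in> ?M" by blast
  next
    fix x y assume "x \<in> ?M" "y \<in> ?M"
    then obtain L1 L2 where L: "?P L1" "?P L2" "x \<in> L1" "y \<in> L2" by blast
    let ?S = "{a + b |a b. a \<in> L1 \<and> b \<in> L2}"
    have "subspace ?S" using L by (intro subspace_sums) auto
    moreover have "\<forall>u\<in>C. \<forall>l\<in>?S. u + l \<in> C"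
    proof (intro ballI)
      fix u l assume "u \<in> C" "l \<in> ?S"
      then obtain a b where "l = a + b" "a \<in> L1" "b \<in> L2" by blast
      with L \<open>u \<in> C\<close> have "(u + a) + b \<in> C" by blast
      then show "u + l \<in> C" using \<open>l = a + b\<close> by (simp add: add.assoc)
    qed
    moreover have "x + y \<in> ?S" using L by blast
    ultimately show "x + y \<in> ?M" by blast
  next
    fix c :: real and x assume "x \<in> ?M"
    then obtain L where "?P L" "x \<in> L" by blast
    then have "c *\<^sub>R x \<in> L" by (auto simp: subspace_def)
    with \<open>?P L\<close> show "c *\<^sub>R x \<in> ?M" by blast
  qed
  have "?P ?M" using sub by blast
  moreover have "\<And>L. ?P L \<Longrightarrow> L \<le> ?M" by blast
  ultimately have "Lsp C = ?M" unfolding Lsp_def by (rule Greatest_equality)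
  then show ?thesis using \<open>?P ?M\<close> by (simp only:) blast
qed

theorem lemma2p8:
  fixes C :: "'a::euclidean_space set" and z :: 'a
  assumes "closed C" and "cone C" and "z \<in> C"
  shows "msum (Lsp C) (line_of z) \<subseteq> Lsp (tangent_cone C z)"
proof -
  have subL: "subspace (Lsp C)" and goodL: "\<And>x l. x \<in> C \<Longrightarrow> l \<in> Lsp C \<Longrightarrow> x + l \<in> C"
    using Lsp_char[of C] by auto
  have z0: "0 \<in> C" using assms(2,3) unfolding cone_def by (metis order_refl scale_zero_left)
  have conesc: "\<And>c x. x \<in> C \<Longrightarrow> c \<ge> 0 \<Longrightarrow> c *\<^sub>R x \<in> C" using assms(2) unfolding cone_def by blast
  have subZ: "subspace (line_of z)"
    unfolding subspace_def line_of_def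
    by (auto simp: scaleR_add_left[symmetric])
  let ?S = "msum (Lsp C) (line_of z)"
  have subS: "subspace ?S" unfolding msum_def using subL subZ by (rule subspace_sums)
  have goodS: "\<forall>w\<in>tangent_cone C z. \<forall>u\<in>?S. w + u \<in> tangent_cone C z"
  proof (intro ballI)
    fix w u assume w: "w \<in> tangent_cone C z" and u: "u \<in> ?S"
    then obtain l a where u_eq: "u = l + a *\<^sub>R z" and l: "l \<in> Lsp C"
      unfolding msum_def line_of_def by blast
    from w obtain t ws where t: "\<And>k. t k > 0" "decseq t" "t \<longlonglongrightarrow> 0" and ws: "ws \<longlonglongrightarrow> w"
      and inC: "\<And>k. z + t k *\<^sub>R ws k \<in> C"
      unfolding tangent_cone_def by blast
    define v where "v k = (if 1 + t k * a \<ge> 0 then a *\<^sub>R z + (1 + t k * a) *\<^sub>R (ws k + l)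
        else - (1 / t k) *\<^sub>R z)" for k
    have vC: "z + t k *\<^sub>R v k \<in> C" for k
    proof (cases "1 + t k * a \<ge> 0")
      case True
      have "z + t k *\<^sub>R ws k + t k *\<^sub>R l \<in> C"
        using goodL[OF inC] subL l by (simp add: subspace_scale)
      then have "(1 + t k * a) *\<^sub>R (z + t k *\<^sub>R ws k + t k *\<^sub>R l) \<in> C"
        using True conesc by blast
      moreover have "(1 + t k * a) *\<^sub>R (z + t k *\<^sub>R ws k + t k *\<^sub>R l) = z + t k *\<^sub>R v k"
        using True by (simp add: v_def algebra_simps)
      ultimately show ?thesis by simp
    next
      case False
      then show ?thesis using t(1)[of k] z0 by (simp add: v_def)
    qed
    have ev: "\<forall>\<^sub>F k in sequentially. 1 + t k * a \<ge> 0"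
    proof -
      have "((\<lambda>k. 1 + t k * a) \<longlongrightarrow> 1 + 0 * a) sequentially"
        by (intro tendsto_intros t(3))
      then have "\<forall>\<^sub>F k in sequentially. 1 + t k * a > 0"
        by (simp add: order_tendstoD(1))
      then show ?thesis by (auto elim: eventually_mono)
    qed
    have lim1: "(\<lambda>k. a *\<^sub>R z + (1 + t k * a) *\<^sub>R (ws k + l)) \<longlonglongrightarrow> a *\<^sub>R z + (1 + 0 * a) *\<^sub>R (w + l)"
      by (intro tendsto_intros t(3) ws)
    have "v \<longlonglongrightarrow> a *\<^sub>R z + (1 + 0 * a) *\<^sub>R (w + l)"
      by (rule Lim_transform_eventually[OF lim1]) (use ev in \<open>auto simp: v_def elim: eventually_mono\<close>)
    then have "v \<longlonglongrightarrow> w + u" by (simp add: u_eq algebra_simps)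
    then show "w + u \<in> tangent_cone C z"
      unfolding tangent_cone_def using t vC by blast
  qed
  show ?thesis using Lsp_char[of "tangent_cone C z"] subS goodS by blast
qed

end
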